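(* Let $A,X^1,\ldots,X^m\in M_n(\mathbb{C})$ with $1\le m\le n$. Then $$D^m\operatorname{per}(A)(X^1,\ldots,X^m)=m!\sum_{\mathcal{I},\mathcal{J}\in Q_{m,n}}\operatorname{per}A(\mathcal{I}|\mathcal{J})\,\Delta_p\big(X^1[\mathcal{I}|\mathcal{J}],\ldots,X^m[\mathcal{I}|\mathcal{J}]\big).$$
   Context: $\operatorname{per}$ is the permanent; $D^m\operatorname{per}(A)(X^1,\ldots,X^m)=\frac{\partial^m}{\partial t_1\cdots\partial t_m}\big|_{t=0}\operatorname{per}(A+t_1X^1+\cdots+t_mX^m)$. $Q_{m,n}=\{(i_1,\ldots,i_m):1\le i_1<\cdots<i_m\le n\}$. $X[\mathcal{I}|\mathcal{J}]$ is the $m\times m$ matrix with $(r,s)$-entry $x_{i_rj_s}$; $A(\mathcal{I}|\mathcal{J})$ is $A$ with rows $\mathcal{I}$ and columns $\mathcal{J}$ deleted (permanent of a $0\times0$ matrix is $1$). For $m\times m$ matrices $T^1,\ldots,T^m$, $\Delta_p(T^1,\ldots,T^m)=\frac{1}{m!}\sum_{\sigma\in S_m}\operatorname{per}\big[T^{\sigma(1)}_{[1]},\ldots,T^{\sigma(m)}_{[m]}\big]$, where $T_{[j]}$ is the $j$-th column of $T$. *)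

theory Defs
  imports "HOL-Analysis.Analysis"
begin

text \<open>Square matrices of size n are functions nat => nat => complex, only entries
  with indices in {0..<n} are relevant (0-based indexing).\<close>

definition per :: "nat \<Rightarrow> (nat \<Rightarrow> nat \<Rightarrow> complex) \<Rightarrow> complex" where
  "per n A = (\<Sum>p | p permutes {0..<n}. \<Prod>i<n. A i (p i))"

fun mixed_partial :: "nat \<Rightarrow> ((nat \<Rightarrow> complex) \<Rightarrow> complex) \<Rightarrow> (nat \<Rightarrow> complex) \<Rightarrow> complex" where
  "mixed_partial 0 F = F"
| "mixed_partial (Suc k) F = (\<lambda>t. deriv (\<lambda>s. mixed_partial k F (t(k := s))) (t k))"

text \<open>D^m per(A)(X^1,...,X^m), with X^k indexed by k = 0..m-1 and t_k the corresponding variable.\<close>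
definition Dper :: "nat \<Rightarrow> nat \<Rightarrow> (nat \<Rightarrow> nat \<Rightarrow> complex) \<Rightarrow> (nat \<Rightarrow> nat \<Rightarrow> nat \<Rightarrow> complex) \<Rightarrow> complex" where
  "Dper m n A X = mixed_partial m
     (\<lambda>t. per n (\<lambda>i j. A i j + (\<Sum>k<m. t k * X k i j))) (\<lambda>_. 0)"

text \<open>Q_{m,n} as the m-element subsets of {0..<n}; an index set is read in increasing order.\<close>
definition Q :: "nat \<Rightarrow> nat \<Rightarrow> nat set set" where
  "Q m n = {I. I \<subseteq> {0..<n} \<and> card I = m}"

definition submat :: "(nat \<Rightarrow> nat \<Rightarrow> complex) \<Rightarrow> nat set \<Rightarrow> nat set \<Rightarrow> (nat \<Rightarrow> nat \<Rightarrow> complex)" where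
  "submat X I J = (\<lambda>r s. X (sorted_list_of_set I ! r) (sorted_list_of_set J ! s))"

text \<open>A(I|J): rows I and columns J deleted (an (n-m)x(n-m) matrix).\<close>
definition delmat :: "nat \<Rightarrow> (nat \<Rightarrow> nat \<Rightarrow> complex) \<Rightarrow> nat set \<Rightarrow> nat set \<Rightarrow> (nat \<Rightarrow> nat \<Rightarrow> complex)" where
  "delmat n A I J = submat A ({0..<n} - I) ({0..<n} - J)"

definition Delta_p :: "nat \<Rightarrow> (nat \<Rightarrow> nat \<Rightarrow> nat \<Rightarrow> complex) \<Rightarrow> complex" where
  "Delta_p m T = (1 / of_nat (fact m)) *
     (\<Sum>\<sigma> | \<sigma> permutes {0..<m}. per m (\<lambda>r j. T (\<sigma> j) r j))"

end

theory Submission imports Defs "HOL-Library.FuncSet" begin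

abbreviation en :: "nat set \<Rightarrow> nat \<Rightarrow> nat" where "en S i \<equiv> sorted_list_of_set S ! i"
definition ix :: "nat set \<Rightarrow> nat \<Rightarrow> nat" where "ix S = the_inv_into {..<card S} (en S)"

lemma en_bij: "finite S \<Longrightarrow> bij_betw (en S) {..<card S} S"
  by (rule bij_betw_nth) auto
lemma ix_bij: "finite S \<Longrightarrow> bij_betw (ix S) S {..<card S}"
  unfolding ix_def by (rule bij_betw_the_inv_into[OF en_bij])
lemma en_ix[simp]: "finite S \<Longrightarrow> x \<in> S \<Longrightarrow> en S (ix S x) = x"
  unfolding ix_def using en_bij[of S] by (auto simp: bij_betw_def f_the_inv_into_f)
lemma ix_en[simp]: "finite S \<Longrightarrow> i < card S \<Longrightarrow> ix S (en S i) = i"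
  unfolding ix_def using en_bij[of S] by (auto simp: bij_betw_def the_inv_into_f_f)
lemma en_in: "finite S \<Longrightarrow> i < card S \<Longrightarrow> en S i \<in> S"
  using en_bij[of S] by (auto simp: bij_betw_def)
lemma ix_lt: "finite S \<Longrightarrow> x \<in> S \<Longrightarrow> ix S x < card S"
  using ix_bij[of S] by (auto simp: bij_betw_def)

lemma perm_bij: "p permutes {..<k} \<Longrightarrow> bij_betw p {..<k} {..<k}"
  by (rule permutes_imp_bij)
lemma perm_lt: "p permutes {..<k} \<Longrightarrow> j < k \<Longrightarrow> p j < k"
  using permutes_in_image by fastforce

lemma card_pre1: "bij_betw h A B \<Longrightarrow> k \<in> B \<Longrightarrow> card {i\<in>A. h i = k} = 1"
proof -
  assume b: "bij_betw h A B" and k: "k \<in> B"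
  then obtain a where a: "a \<in> A" "h a = k" by (auto simp: bij_betw_def)
  then have "{i\<in>A. h i = k} = {a}" using b by (auto simp: bij_betw_def inj_on_def)
  then show ?thesis by simp
qed


definition pp :: "nat \<Rightarrow> nat set \<Rightarrow> nat set \<Rightarrow> (nat \<Rightarrow> nat) \<Rightarrow> (nat \<Rightarrow> nat) \<Rightarrow> nat \<Rightarrow> nat" where
  "pp n I J \<tau> \<pi> i = (if i \<in> I then en J (\<pi> (ix I i))
      else if i < n then en ({..<n}-J) (\<tau> (ix ({..<n}-I) i)) else i)"

definition gg :: "nat \<Rightarrow> nat set \<Rightarrow> (nat \<Rightarrow> nat) \<Rightarrow> (nat \<Rightarrow> nat) \<Rightarrow> nat \<Rightarrow> nat option" where
  "gg n I \<sigma> \<pi> = restrict (\<lambda>i. if i \<in> I then Some (\<sigma> (\<pi> (ix I i))) else None) {..<n}"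

definition Opt :: "nat \<Rightarrow> nat option set" where "Opt m = insert None (Some ` {..<m})"

definition ex :: "nat \<Rightarrow> (nat \<Rightarrow> nat option) \<Rightarrow> nat \<Rightarrow> nat" where
  "ex n g k = card {i. i < n \<and> g i = Some k}"

lemma Q_iff: "I \<in> Q m n \<longleftrightarrow> I \<subseteq> {..<n} \<and> card I = m"
  by (simp add: Q_def atLeast0LessThan)

lemma fin_sub: "I \<subseteq> {..<(n::nat)} \<Longrightarrow> finite I" using finite_subset by blast

lemma card_compl: "I \<subseteq> {..<(n::nat)} \<Longrightarrow> card ({..<n} - I) = n - card I"
  by (simp add: card_Diff_subset fin_sub)

lemma L1:
  assumes I: "I \<in> Q m n" and J: "J \<in> Q m n" and mn: "m \<le> n"
    and \<tau>: "\<tau> permutes {..<n-m}" and \<sigma>: "\<sigma> permutes {..<m}" and \<pi>: "\<pi> permutes {..<m}"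
  shows "pp n I J \<tau> \<pi> permutes {..<n}" "gg n I \<sigma> \<pi> \<in> {..<n} \<rightarrow>\<^sub>E Opt m"
    "\<forall>k<m. ex n (gg n I \<sigma> \<pi>) k = 1"
    "bij_betw (pp n I J \<tau> \<pi>) I J" "bij_betw (pp n I J \<tau> \<pi>) ({..<n} - I) ({..<n} - J)"
proof -
  have Is: "I \<subseteq> {..<n}" "card I = m" and Js: "J \<subseteq> {..<n}" "card J = m" using I J by (auto simp: Q_iff)
  have fI: "finite I" "finite J" using Is Js fin_sub by auto
  define Ic where "Ic = {..<n} - I"
  define Jc where "Jc = {..<n} - J"
  have fc: "finite Ic" "finite Jc" "card Ic = n - m" "card Jc = n - m"
    using Is Js by (auto simp: Ic_def Jc_def card_compl)
  have b1: "bij_betw (\<lambda>i. en J (\<pi> (ix I i))) I J"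
    using bij_betw_trans[OF bij_betw_trans[OF ix_bij[OF fI(1), unfolded Is(2)] perm_bij[OF \<pi>]] en_bij[OF fI(2), unfolded Js(2)]] Is Js
    by (simp add: comp_def)
  have b2: "bij_betw (\<lambda>i. en Jc (\<tau> (ix Ic i))) Ic Jc"
    using bij_betw_trans[OF bij_betw_trans[OF ix_bij[OF fc(1), unfolded fc(3)] perm_bij[OF \<tau>]] en_bij[OF fc(2), unfolded fc(4)]] fc
    by (simp add: comp_def)
  have b1': "bij_betw (pp n I J \<tau> \<pi>) I J"
    using b1 by (rule bij_betw_cong[THEN iffD1, rotated]) (auto simp: pp_def)
  have b2': "bij_betw (pp n I J \<tau> \<pi>) Ic Jc"
    using b2 by (rule bij_betw_cong[THEN iffD1, rotated]) (simp add: pp_def Ic_def Jc_def)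
  show "bij_betw (pp n I J \<tau> \<pi>) I J" by (rule b1')
  show "bij_betw (pp n I J \<tau> \<pi>) ({..<n} - I) ({..<n} - J)" using b2' by (simp add: Ic_def Jc_def)
  have "bij_betw (pp n I J \<tau> \<pi>) (I \<union> Ic) (J \<union> Jc)"
    by (rule bij_betw_combine[OF b1' b2']) (auto simp: Jc_def)
  moreover have "I \<union> Ic = {..<n}" "J \<union> Jc = {..<n}" using Is Js by (auto simp: Ic_def Jc_def)
  ultimately show "pp n I J \<tau> \<pi> permutes {..<n}"
    by (intro bij_imp_permutes) (auto simp: pp_def)
  show "gg n I \<sigma> \<pi> \<in> {..<n} \<rightarrow>\<^sub>E Opt m"
    using ix_lt[OF fI(1)] Is perm_lt[OF \<sigma>] perm_lt[OF \<pi>] by (auto simp: gg_def Opt_def)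
  have b3: "bij_betw (\<lambda>i. \<sigma> (\<pi> (ix I i))) I {..<m}"
    using bij_betw_trans[OF bij_betw_trans[OF ix_bij[OF fI(1), unfolded Is(2)] perm_bij[OF \<pi>]] perm_bij[OF \<sigma>]] Is
    by (simp add: comp_def)
  show "\<forall>k<m. ex n (gg n I \<sigma> \<pi>) k = 1"
  proof (intro allI impI)
    fix k assume "k < m"
    have "{i. i < n \<and> gg n I \<sigma> \<pi> i = Some k} = {i\<in>I. \<sigma> (\<pi> (ix I i)) = k}"
      using Is by (auto simp: gg_def)
    then show "ex n (gg n I \<sigma> \<pi>) k = 1"
      using card_pre1[OF b3] \<open>k<m\<close> by (simp add: ex_def)
  qed
qed


definition psiI :: "nat \<Rightarrow> (nat \<Rightarrow> nat option) \<Rightarrow> nat set" where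
  "psiI n g = {i. i < n \<and> g i \<noteq> None}"
definition psiT :: "nat \<Rightarrow> nat \<Rightarrow> (nat \<Rightarrow> nat) \<Rightarrow> (nat \<Rightarrow> nat option) \<Rightarrow> nat \<Rightarrow> nat" where
  "psiT m n p g i = (if i < n - m then ix ({..<n} - p ` psiI n g) (p (en ({..<n} - psiI n g) i)) else i)"
definition psiS :: "nat \<Rightarrow> nat \<Rightarrow> (nat \<Rightarrow> nat) \<Rightarrow> (nat \<Rightarrow> nat option) \<Rightarrow> nat \<Rightarrow> nat" where
  "psiS m n p g j = (if j < m then the (g (inv p (en (p ` psiI n g) j))) else j)"
definition psiP :: "nat \<Rightarrow> nat \<Rightarrow> (nat \<Rightarrow> nat) \<Rightarrow> (nat \<Rightarrow> nat option) \<Rightarrow> nat \<Rightarrow> nat" where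
  "psiP m n p g r = (if r < m then ix (p ` psiI n g) (p (en (psiI n g) r)) else r)"

lemma L2:
  assumes p: "p permutes {..<n}" and g: "g \<in> {..<n} \<rightarrow>\<^sub>E Opt m" and good: "\<forall>k<m. ex n g k = 1"
    and mn: "m \<le> n"
  shows "psiI n g \<in> Q m n" "p ` psiI n g \<in> Q m n"
    "bij_betw p (psiI n g) (p ` psiI n g)"
    "bij_betw p ({..<n} - psiI n g) ({..<n} - p ` psiI n g)"
    "bij_betw (\<lambda>i. the (g i)) (psiI n g) {..<m}"
    "psiT m n p g permutes {..<n-m}" "psiS m n p g permutes {..<m}" "psiP m n p g permutes {..<m}"
proof -
  define I where "I = psiI n g"
  define J where "J = p ` I"
  have Isub: "I \<subseteq> {..<n}" by (auto simp: I_def psiI_def)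
  have fI: "finite I" using Isub fin_sub by blast
  have injp: "inj p" using p permutes_inj by blast
  have pimg: "p ` {..<n} = {..<n}" using p permutes_image by blast
  have gv: "i \<in> I \<Longrightarrow> \<exists>k<m. g i = Some k" for i
    using g by (force simp: I_def psiI_def Opt_def PiE_def Pi_def)
  have lab: "bij_betw (\<lambda>i. the (g i)) I {..<m}"
  proof (rule bij_betw_imageI)
    show "inj_on (\<lambda>i. the (g i)) I"
    proof (rule inj_onI)
      fix x y assume xy: "x \<in> I" "y \<in> I" "the (g x) = the (g y)"
      obtain k where k: "k < m" "g x = Some k" using gv[OF xy(1)] by auto
      then have gy: "g y = Some k" using gv[OF xy(2)] xy(3) by auto
      have "card {i. i < n \<and> g i = Some k} = 1" using good k(1) by (simp add: ex_def)
      then obtain a where "{i. i < n \<and> g i = Some k} = {a}" using card_1_singletonE by blast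
      moreover have "x \<in> {i. i < n \<and> g i = Some k}" "y \<in> {i. i < n \<and> g i = Some k}"
        using xy Isub k gy by auto
      ultimately show "x = y" by auto
    qed
    show "(\<lambda>i. the (g i)) ` I = {..<m}"
    proof
      show "(\<lambda>i. the (g i)) ` I \<subseteq> {..<m}" using gv by force
      show "{..<m} \<subseteq> (\<lambda>i. the (g i)) ` I"
      proof
        fix k assume "k \<in> {..<m}"
        then have "card {i. i < n \<and> g i = Some k} = 1" using good by (simp add: ex_def)
        then obtain a where "{i. i < n \<and> g i = Some k} = {a}" using card_1_singletonE by blast
        then have "a < n" "g a = Some k" by auto
        then show "k \<in> (\<lambda>i. the (g i)) ` I" by (force simp: I_def psiI_def)
      qed
    qed
  qed
  then show "bij_betw (\<lambda>i. the (g i)) (psiI n g) {..<m}" by (simp add: I_def)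
  have cI: "card I = m" using bij_betw_same_card[OF lab] by simp
  then show "psiI n g \<in> Q m n" using Isub by (simp add: Q_iff I_def)
  have bJ: "bij_betw p I J" unfolding J_def using injp by (simp add: bij_betw_imageI inj_on_subset)
  then show "bij_betw p (psiI n g) (p ` psiI n g)" by (simp add: I_def J_def)
  have Jsub: "J \<subseteq> {..<n}" using Isub pimg by (auto simp: J_def)
  have cJ: "card J = m" using bij_betw_same_card[OF bJ] cI by simp
  then show "p ` psiI n g \<in> Q m n" using Jsub by (simp add: Q_iff I_def J_def)
  have fJ: "finite J" using Jsub fin_sub by blast
  have bc: "bij_betw p ({..<n} - I) ({..<n} - J)"
    unfolding J_def using injp pimg
    by (intro bij_betw_imageI) (auto simp: inj_on_def image_set_diff[OF injp])
  then show "bij_betw p ({..<n} - psiI n g) ({..<n} - p ` psiI n g)" by (simp add: I_def J_def)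
  have fc: "finite ({..<n} - I)" "finite ({..<n} - J)" "card ({..<n} - I) = n - m" "card ({..<n} - J) = n - m"
    using Isub Jsub cI cJ by (auto simp: card_compl)
  have "bij_betw (\<lambda>i. ix ({..<n} - J) (p (en ({..<n} - I) i))) {..<n-m} {..<n-m}"
    using bij_betw_trans[OF bij_betw_trans[OF en_bij[OF fc(1), unfolded fc(3)] bc] ix_bij[OF fc(2), unfolded fc(4)]]
    by (simp add: comp_def)
  then show "psiT m n p g permutes {..<n-m}"
    by (intro bij_imp_permutes) (auto simp: psiT_def I_def J_def elim!: bij_betw_cong[THEN iffD1, rotated])
  have "bij_betw (\<lambda>r. ix J (p (en I r))) {..<m} {..<m}"
    using bij_betw_trans[OF bij_betw_trans[OF en_bij[OF fI, unfolded cI] bJ] ix_bij[OF fJ, unfolded cJ]]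
    by (simp add: comp_def)
  then show "psiP m n p g permutes {..<m}"
    by (intro bij_imp_permutes) (auto simp: psiP_def I_def J_def elim!: bij_betw_cong[THEN iffD1, rotated])
  have pinv: "p' permutes {..<n}" "\<And>x. p' (p x) = x" if "p' = inv p" for p'
    using p that by (auto simp: permutes_inv permutes_inverses)
  have binv: "bij_betw (inv p) J I"
  proof (rule bij_betw_imageI)
    show "inj_on (inv p) J" using pinv(1)[OF refl] permutes_inj inj_on_subset by blast
    show "inv p ` J = I" unfolding J_def image_image using pinv(2)[OF refl] by simp
  qed
  have "bij_betw (\<lambda>j. the (g (inv p (en J j)))) {..<m} {..<m}"
    using bij_betw_trans[OF bij_betw_trans[OF en_bij[OF fJ, unfolded cJ] binv] lab]
    by (simp add: comp_def)
  then show "psiS m n p g permutes {..<m}"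
    by (intro bij_imp_permutes) (auto simp: psiS_def I_def J_def elim!: bij_betw_cong[THEN iffD1, rotated])
qed


lemma L3:
  assumes I: "I \<in> Q m n" and J: "J \<in> Q m n" and mn: "m \<le> n"
    and \<tau>: "\<tau> permutes {..<n-m}" and \<sigma>: "\<sigma> permutes {..<m}" and \<pi>: "\<pi> permutes {..<m}"
  shows "psiI n (gg n I \<sigma> \<pi>) = I" "pp n I J \<tau> \<pi> ` I = J"
    "psiT m n (pp n I J \<tau> \<pi>) (gg n I \<sigma> \<pi>) = \<tau>"
    "psiS m n (pp n I J \<tau> \<pi>) (gg n I \<sigma> \<pi>) = \<sigma>"
    "psiP m n (pp n I J \<tau> \<pi>) (gg n I \<sigma> \<pi>) = \<pi>"
proof -
  note l1 = L1[OF assms]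
  define p where "p = pp n I J \<tau> \<pi>"
  have Is: "I \<subseteq> {..<n}" "card I = m" and Js: "J \<subseteq> {..<n}" "card J = m" using I J by (auto simp: Q_iff)
  have fI: "finite I" "finite J" using Is Js fin_sub by auto
  have fc: "finite ({..<n} - I)" "finite ({..<n} - J)" "card ({..<n} - I) = n - m" "card ({..<n} - J) = n - m"
    using Is Js by (auto simp: card_compl)
  show pI: "psiI n (gg n I \<sigma> \<pi>) = I" using Is by (auto simp: psiI_def gg_def)
  show pJ: "pp n I J \<tau> \<pi> ` I = J" using l1(4) by (simp add: bij_betw_def)
  show "psiT m n (pp n I J \<tau> \<pi>) (gg n I \<sigma> \<pi>) = \<tau>"
  proof
    fix i show "psiT m n (pp n I J \<tau> \<pi>) (gg n I \<sigma> \<pi>) i = \<tau> i"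
    proof (cases "i < n - m")
      case True
      have e: "en ({..<n} - I) i \<in> {..<n} - I" using en_in[OF fc(1)] fc(3) True by simp
      have "pp n I J \<tau> \<pi> (en ({..<n} - I) i) = en ({..<n} - J) (\<tau> i)"
        using e fc True by (simp add: pp_def)
      then show ?thesis using True pI pJ fc perm_lt[OF \<tau> True] by (simp add: psiT_def)
    next
      case False
      then show ?thesis using \<tau> by (simp add: psiT_def permutes_not_in)
    qed
  qed
  show "psiP m n (pp n I J \<tau> \<pi>) (gg n I \<sigma> \<pi>) = \<pi>"
  proof
    fix r show "psiP m n (pp n I J \<tau> \<pi>) (gg n I \<sigma> \<pi>) r = \<pi> r"
    proof (cases "r < m")
      case True
      have e: "en I r \<in> I" using en_in[OF fI(1)] Is True by simp
      have "pp n I J \<tau> \<pi> (en I r) = en J (\<pi> r)"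
        using e Is fI True by (simp add: pp_def)
      then show ?thesis using True pI pJ Js fI perm_lt[OF \<pi> True] by (simp add: psiP_def)
    next
      case False
      then show ?thesis using \<pi> by (simp add: psiP_def permutes_not_in)
    qed
  qed
  show "psiS m n (pp n I J \<tau> \<pi>) (gg n I \<sigma> \<pi>) = \<sigma>"
  proof
    fix j show "psiS m n (pp n I J \<tau> \<pi>) (gg n I \<sigma> \<pi>) j = \<sigma> j"
    proof (cases "j < m")
      case True
      define r where "r = inv \<pi> j"
      have r: "r < m" "\<pi> r = j" using True \<pi> unfolding r_def
        by (auto simp: permutes_inverses perm_lt[OF permutes_inv[OF \<pi>]])
      have e: "en I r \<in> I" using en_in[OF fI(1)] Is r by simp
      have pe: "p (en I r) = en J j"
        using e Is fI r by (simp add: pp_def p_def)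
      have "inv p (en J j) = en I r" using pe[symmetric] l1(1) unfolding p_def
        by (simp add: permutes_inverses)
      moreover have "gg n I \<sigma> \<pi> (en I r) = Some (\<sigma> j)" using e Is fI r by (auto simp: gg_def)
      ultimately show ?thesis using True pI pJ unfolding p_def by (simp add: psiS_def)
    next
      case False
      then show ?thesis using \<sigma> by (simp add: psiS_def permutes_not_in)
    qed
  qed
qed


lemma L4:
  assumes p: "p permutes {..<n}" and g: "g \<in> {..<n} \<rightarrow>\<^sub>E Opt m" and good: "\<forall>k<m. ex n g k = 1"
    and mn: "m \<le> n"
  shows "pp n (psiI n g) (p ` psiI n g) (psiT m n p g) (psiP m n p g) = p"
    "gg n (psiI n g) (psiS m n p g) (psiP m n p g) = g"
proof -
  note l2 = L2[OF assms]
  define I where "I = psiI n g"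
  define J where "J = p ` I"
  have Is: "I \<subseteq> {..<n}" "card I = m" and Js: "J \<subseteq> {..<n}" "card J = m"
    using l2(1,2) by (auto simp: Q_iff I_def J_def)
  have fI: "finite I" "finite J" using Is Js fin_sub by auto
  have fc: "finite ({..<n} - I)" "finite ({..<n} - J)" "card ({..<n} - I) = n - m" "card ({..<n} - J) = n - m"
    using Is Js by (auto simp: card_compl)
  have bJ: "bij_betw p I J" and bc: "bij_betw p ({..<n} - I) ({..<n} - J)"
    using l2(3,4) by (simp_all add: I_def J_def)
  have piI: "psiP m n p g (ix I i) = ix J (p i)" if "i \<in> I" for i
    using that ix_lt[OF fI(1) that] Is fI by (simp add: psiP_def I_def J_def)
  show "pp n (psiI n g) (p ` psiI n g) (psiT m n p g) (psiP m n p g) = p"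
  proof
    fix i
    show "pp n (psiI n g) (p ` psiI n g) (psiT m n p g) (psiP m n p g) i = p i"
    proof (cases "i \<in> I")
      case True
      have "p i \<in> J" using True by (simp add: J_def)
      then show ?thesis using True piI[OF True] fI by (simp add: pp_def I_def[symmetric] J_def[symmetric])
    next
      case False
      show ?thesis
      proof (cases "i < n")
        case True
        then have ic: "i \<in> {..<n} - I" using False by simp
        have pc: "p i \<in> {..<n} - J" using bc ic by (auto simp: bij_betw_def)
        have "psiT m n p g (ix ({..<n} - I) i) = ix ({..<n} - J) (p i)"
          using ix_lt[OF fc(1) ic] fc ic by (simp add: psiT_def I_def J_def)
        then show ?thesis using False True pc fc by (simp add: pp_def I_def[symmetric] J_def[symmetric])
      next
        case False
        then show ?thesis using \<open>i \<notin> I\<close> p by (simp add: pp_def I_def[symmetric] permutes_not_in)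
      qed
    qed
  qed
  show "gg n (psiI n g) (psiS m n p g) (psiP m n p g) = g"
  proof
    fix i
    show "gg n (psiI n g) (psiS m n p g) (psiP m n p g) i = g i"
    proof (cases "i < n")
      case False
      then have "g i = undefined" using PiE_arb[OF g] by simp
      then show ?thesis using False unfolding gg_def restrict_def by simp
    next
      case True
      show ?thesis
      proof (cases "i \<in> I")
        case False
        then show ?thesis using True by (simp add: gg_def I_def psiI_def)
      next
        case iI: True
        have pj: "p i \<in> J" using iI by (simp add: J_def)
        have jm: "ix J (p i) < m" using ix_lt[OF fI(2) pj] Js by simp
        have "inv p (p i) = i" using p by (simp add: permutes_inverses)
        then have "psiS m n p g (ix J (p i)) = the (g i)"
          using jm pj fI by (simp add: psiS_def I_def J_def)
        moreover have "g i \<noteq> None" using iI by (simp add: I_def psiI_def)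
        ultimately show ?thesis using True iI piI[OF iI] by (auto simp: gg_def I_def[symmetric])
      qed
    qed
  qed
qed


definition cf :: "nat \<Rightarrow> (nat \<Rightarrow> nat \<Rightarrow> complex) \<Rightarrow> (nat \<Rightarrow> nat \<Rightarrow> nat \<Rightarrow> complex)
   \<Rightarrow> (nat \<Rightarrow> nat) \<times> (nat \<Rightarrow> nat option) \<Rightarrow> complex" where
  "cf n A X x = (\<Prod>i<n. case snd x i of None \<Rightarrow> A i (fst x i) | Some k \<Rightarrow> X k i (fst x i))"

definition TT :: "nat \<Rightarrow> nat \<Rightarrow> (nat \<Rightarrow> nat \<Rightarrow> complex) \<Rightarrow> (nat \<Rightarrow> nat \<Rightarrow> nat \<Rightarrow> complex)
   \<Rightarrow> nat set \<Rightarrow> nat set \<Rightarrow> (nat \<Rightarrow> nat) \<Rightarrow> (nat \<Rightarrow> nat) \<Rightarrow> (nat \<Rightarrow> nat) \<Rightarrow> complex" where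
  "TT m n A X I J \<tau> \<sigma> \<pi> = (\<Prod>i<n-m. A (en ({..<n}-I) i) (en ({..<n}-J) (\<tau> i))) *
      (\<Prod>r<m. X (\<sigma> (\<pi> r)) (en I r) (en J (\<pi> r)))"

lemma L5:
  assumes I: "I \<in> Q m n" and J: "J \<in> Q m n" and mn: "m \<le> n"
    and \<tau>: "\<tau> permutes {..<n-m}" and \<sigma>: "\<sigma> permutes {..<m}" and \<pi>: "\<pi> permutes {..<m}"
  shows "cf n A X (pp n I J \<tau> \<pi>, gg n I \<sigma> \<pi>) = TT m n A X I J \<tau> \<sigma> \<pi>"
proof -
  have Is: "I \<subseteq> {..<n}" "card I = m" and Js: "J \<subseteq> {..<n}" "card J = m" using I J by (auto simp: Q_iff)
  have fI: "finite I" "finite J" using Is Js fin_sub by auto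
  have fc: "finite ({..<n} - I)" "finite ({..<n} - J)" "card ({..<n} - I) = n - m" "card ({..<n} - J) = n - m"
    using Is Js by (auto simp: card_compl)
  define F where "F i = (case gg n I \<sigma> \<pi> i of None \<Rightarrow> A i (pp n I J \<tau> \<pi> i)
      | Some k \<Rightarrow> X k i (pp n I J \<tau> \<pi> i))" for i
  have u: "{..<n} = I \<union> ({..<n} - I)" using Is by auto
  have "cf n A X (pp n I J \<tau> \<pi>, gg n I \<sigma> \<pi>) = prod F {..<n}" unfolding cf_def F_def fst_conv snd_conv ..
  also have "\<dots> = prod F I * prod F ({..<n} - I)"
    by (subst u, rule prod.union_disjoint) (use fI fc in auto)
  also have "prod F I = (\<Prod>r<m. F (en I r))"
    using prod.reindex_bij_betw[OF en_bij[OF fI(1)], of F] Is by simp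
  also have "\<dots> = (\<Prod>r<m. X (\<sigma> (\<pi> r)) (en I r) (en J (\<pi> r)))"
  proof (rule prod.cong[OF refl])
    fix r assume "r \<in> {..<m}"
    then have "en I r \<in> I" using en_in[OF fI(1)] Is by simp
    then show "F (en I r) = X (\<sigma> (\<pi> r)) (en I r) (en J (\<pi> r))"
      using Is \<open>r \<in> {..<m}\<close> fI by (auto simp: F_def gg_def pp_def)
  qed
  also have "prod F ({..<n} - I) = (\<Prod>i<n-m. F (en ({..<n} - I) i))"
    using prod.reindex_bij_betw[OF en_bij[OF fc(1)], of F] fc by simp
  also have "\<dots> = (\<Prod>i<n-m. A (en ({..<n}-I) i) (en ({..<n}-J) (\<tau> i)))"
  proof (rule prod.cong[OF refl])
    fix i assume "i \<in> {..<n-m}"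
    then have e: "en ({..<n} - I) i \<in> {..<n} - I" using en_in[OF fc(1)] fc by simp
    then show "F (en ({..<n} - I) i) = A (en ({..<n}-I) i) (en ({..<n}-J) (\<tau> i))"
      using fc \<open>i \<in> {..<n-m}\<close> by (simp add: F_def gg_def pp_def)
  qed
  finally show ?thesis by (simp add: TT_def mult.commute)
qed

definition hj :: "nat \<Rightarrow> nat \<Rightarrow> nat \<Rightarrow> complex \<Rightarrow> complex" where
  "hj j k e x = (if k < j then of_nat e * x ^ (e - 1) else x ^ e)"

lemma mp_mono:
  fixes G :: "'g set" and c :: "'g \<Rightarrow> complex" and e :: "'g \<Rightarrow> nat \<Rightarrow> nat"
  assumes fin: "finite G"
  shows "j \<le> m \<Longrightarrow> mixed_partial j (\<lambda>t. \<Sum>g\<in>G. c g * (\<Prod>k<m. t k ^ e g k))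
     = (\<lambda>t. \<Sum>g\<in>G. c g * (\<Prod>k<m. hj j k (e g k) (t k)))"
proof (induction j)
  case 0
  then show ?case by (simp add: hj_def)
next
  case (Suc j)
  then have jm: "j < m" by simp
  show ?case
  proof
    fix t :: "nat \<Rightarrow> complex"
    define R where "R g = (\<Prod>k\<in>{..<m}-{j}. hj j k (e g k) (t k))" for g
    have split: "(\<Prod>k<m. f k) = f j * (\<Prod>k\<in>{..<m}-{j}. f k)" for f :: "nat \<Rightarrow> complex"
      using jm by (subst prod.remove[of _ j]) auto
    have eq: "(\<lambda>s. mixed_partial j (\<lambda>t. \<Sum>g\<in>G. c g * (\<Prod>k<m. t k ^ e g k)) (t(j := s)))
       = (\<lambda>s. \<Sum>g\<in>G. (c g * R g) * s ^ e g j)"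
    proof
      fix s
      have "\<And>g. (\<Prod>k<m. hj j k (e g k) ((t(j:=s)) k)) = s ^ e g j * R g"
        by (subst split) (auto simp: R_def hj_def intro!: prod.cong)
      then show "mixed_partial j (\<lambda>t. \<Sum>g\<in>G. c g * (\<Prod>k<m. t k ^ e g k)) (t(j := s))
          = (\<Sum>g\<in>G. (c g * R g) * s ^ e g j)"
        using Suc by (simp add: mult_ac)
    qed
    have d: "((\<lambda>s. \<Sum>g\<in>G. (c g * R g) * s ^ e g j) has_field_derivative
        (\<Sum>g\<in>G. (c g * R g) * (of_nat (e g j) * t j ^ (e g j - 1)))) (at (t j))"
      by (auto intro!: derivative_eq_intros sum.cong simp: mult_ac)
    have "\<And>g. (\<Prod>k<m. hj (Suc j) k (e g k) (t k)) = (of_nat (e g j) * t j ^ (e g j - 1)) * R g"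
      unfolding R_def by (subst split) (auto simp: hj_def less_Suc_eq intro!: prod.cong)
    then show "mixed_partial (Suc j) (\<lambda>t. \<Sum>g\<in>G. c g * (\<Prod>k<m. t k ^ e g k)) t
        = (\<Sum>g\<in>G. c g * (\<Prod>k<m. hj (Suc j) k (e g k) (t k)))"
      using DERIV_imp_deriv[OF d] by (simp add: eq mult_ac)
  qed
qed

lemma hj_zero:
  "(\<Prod>k<m. hj m k (e k) 0) = (if \<forall>k<m. e k = 1 then 1 else 0)"
proof (cases "\<forall>k<m. e k = 1")
  case True
  then show ?thesis by (simp add: hj_def)
next
  case False
  then obtain k where "k < m" "e k \<noteq> 1" by auto
  then have "hj m k (e k) 0 = 0" by (cases "e k") (auto simp: hj_def)
  then show ?thesis using False \<open>k<m\<close> by (auto intro: prod_zero)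
qed

lemma prod_opt:
  fixes t :: "nat \<Rightarrow> complex"
  shows "(\<forall>i<n. g i \<in> Opt m) \<Longrightarrow>
    (\<Prod>i<n. case g i of None \<Rightarrow> 1 | Some k \<Rightarrow> t k) = (\<Prod>k<m. t k ^ ex n g k)"
proof (induction n)
  case 0
  then show ?case by (simp add: ex_def)
next
  case (Suc n)
  have cs: "ex (Suc n) g k = ex n g k + (if g n = Some k then 1 else 0)" for k
  proof -
    have "{i. i < Suc n \<and> g i = Some k} = {i. i < n \<and> g i = Some k} \<union> (if g n = Some k then {n} else {})"
      by (auto simp: less_Suc_eq)
    then show ?thesis unfolding ex_def by (simp add: card_insert_if)
  qed
  have gn: "g n \<in> Opt m" using Suc.prems by simp
  have "(\<Prod>k<m. t k ^ (if g n = Some k then 1 else 0)) = (case g n of None \<Rightarrow> 1 | Some k \<Rightarrow> t k)"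
  proof (cases "g n")
    case None then show ?thesis by simp
  next
    case (Some k0)
    then have "k0 < m" using gn by (auto simp: Opt_def)
    have "(\<Prod>k<m. t k ^ (if g n = Some k then 1 else 0)) = (\<Prod>k<m. if k = k0 then t k else 1)"
      using Some by (intro prod.cong) auto
    also have "\<dots> = t k0" using \<open>k0<m\<close> by (simp add: prod.delta)
    finally show ?thesis using Some by simp
  qed
  then show ?case using Suc by (simp add: cs power_add prod.distrib)
qed

lemma expand:
  fixes t :: "nat \<Rightarrow> complex"
  shows "per n (\<lambda>i j. A i j + (\<Sum>k<m. t k * X k i j)) =
    (\<Sum>x\<in>{p. p permutes {0..<n}} \<times> ({..<n} \<rightarrow>\<^sub>E Opt m). cf n A X x * (\<Prod>k<m. t k ^ ex n (snd x) k))"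
proof -
  define w where "w p i v = (case v of None \<Rightarrow> A i (p i) | Some k \<Rightarrow> t k * X k i (p i))" for p i v
  have a: "A i (p i) + (\<Sum>k<m. t k * X k i (p i)) = (\<Sum>v\<in>Opt m. w p i v)" for p i
    by (simp add: Opt_def w_def sum.reindex)
  have b: "(\<Prod>i<n. w p i (g i)) = cf n A X (p, g) * (\<Prod>k<m. t k ^ ex n g k)"
    if "g \<in> {..<n} \<rightarrow>\<^sub>E Opt m" for p g
  proof -
    have "(\<Prod>i<n. w p i (g i)) = (\<Prod>i<n. (case g i of None \<Rightarrow> A i (p i) | Some k \<Rightarrow> X k i (p i))
         * (case g i of None \<Rightarrow> 1 | Some k \<Rightarrow> t k))"
      by (intro prod.cong) (auto simp: w_def split: option.split)
    also have "\<dots> = cf n A X (p, g) * (\<Prod>i<n. case g i of None \<Rightarrow> 1 | Some k \<Rightarrow> t k)"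
      by (simp only: prod.distrib cf_def fst_conv snd_conv)
    also have "\<dots> = cf n A X (p, g) * (\<Prod>k<m. t k ^ ex n g k)"
      using that by (subst prod_opt[of n g m]) auto
    finally show ?thesis .
  qed
  have "per n (\<lambda>i j. A i j + (\<Sum>k<m. t k * X k i j)) =
     (\<Sum>p | p permutes {0..<n}. \<Prod>i<n. \<Sum>v\<in>Opt m. w p i v)"
    unfolding per_def by (simp add: a)
  also have "\<dots> = (\<Sum>p | p permutes {0..<n}. \<Sum>g\<in>{..<n} \<rightarrow>\<^sub>E Opt m. \<Prod>i<n. w p i (g i))"
    by (intro sum.cong refl prod_sum_PiE) (auto simp: Opt_def)
  also have "\<dots> = (\<Sum>p | p permutes {0..<n}. \<Sum>g\<in>{..<n} \<rightarrow>\<^sub>E Opt m. cf n A X (p, g) * (\<Prod>k<m. t k ^ ex n g k))"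
    by (intro sum.cong refl b) 
  also have "\<dots> = (\<Sum>x\<in>{p. p permutes {0..<n}} \<times> ({..<n} \<rightarrow>\<^sub>E Opt m). cf n A X x * (\<Prod>k<m. t k ^ ex n (snd x) k))"
    by (simp add: sum.cartesian_product split_beta)
  finally show ?thesis .
qed

lemma SB:
  assumes mn: "m \<le> n"
  shows "(\<Sum>(I,J,\<tau>,\<sigma>,\<pi>)\<in>Q m n \<times> Q m n \<times> {\<tau>. \<tau> permutes {..<n-m}} \<times> {\<sigma>. \<sigma> permutes {..<m}} \<times> {\<pi>. \<pi> permutes {..<m}}.
      TT m n A X I J \<tau> \<sigma> \<pi>)
    = (\<Sum>x\<in>{x\<in>{p. p permutes {..<n}} \<times> ({..<n} \<rightarrow>\<^sub>E Opt m). \<forall>k<m. ex n (snd x) k = 1}. cf n A X x)"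
proof (rule sum.reindex_bij_witness[where j = "\<lambda>(I,J,\<tau>,\<sigma>,\<pi>). (pp n I J \<tau> \<pi>, gg n I \<sigma> \<pi>)"
      and i = "\<lambda>(p,g). (psiI n g, p ` psiI n g, psiT m n p g, psiS m n p g, psiP m n p g)"])
  fix a assume "a \<in> Q m n \<times> Q m n \<times> {\<tau>. \<tau> permutes {..<n-m}} \<times> {\<sigma>. \<sigma> permutes {..<m}} \<times> {\<pi>. \<pi> permutes {..<m}}"
  then obtain I J \<tau> \<sigma> \<pi> where a: "a = (I,J,\<tau>,\<sigma>,\<pi>)" and h: "I \<in> Q m n" "J \<in> Q m n"
    "\<tau> permutes {..<n-m}" "\<sigma> permutes {..<m}" "\<pi> permutes {..<m}" by auto
  note l1 = L1[OF h(1,2) mn h(3-5)] and l3 = L3[OF h(1,2) mn h(3-5)]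
  show "(\<lambda>(p,g). (psiI n g, p ` psiI n g, psiT m n p g, psiS m n p g, psiP m n p g))
      ((\<lambda>(I,J,\<tau>,\<sigma>,\<pi>). (pp n I J \<tau> \<pi>, gg n I \<sigma> \<pi>)) a) = a"
    using l3 by (simp add: a)
  show "(\<lambda>(I,J,\<tau>,\<sigma>,\<pi>). (pp n I J \<tau> \<pi>, gg n I \<sigma> \<pi>)) a
      \<in> {x\<in>{p. p permutes {..<n}} \<times> ({..<n} \<rightarrow>\<^sub>E Opt m). \<forall>k<m. ex n (snd x) k = 1}"
    using l1 by (simp add: a)
  show "cf n A X ((\<lambda>(I,J,\<tau>,\<sigma>,\<pi>). (pp n I J \<tau> \<pi>, gg n I \<sigma> \<pi>)) a) = (\<lambda>(I,J,\<tau>,\<sigma>,\<pi>). TT m n A X I J \<tau> \<sigma> \<pi>) a"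
    using L5[OF h(1,2) mn h(3-5)] by (simp add: a)
next
  fix b assume "b \<in> {x\<in>{p. p permutes {..<n}} \<times> ({..<n} \<rightarrow>\<^sub>E Opt m). \<forall>k<m. ex n (snd x) k = 1}"
  then obtain p g where b: "b = (p,g)" and h: "p permutes {..<n}" "g \<in> {..<n} \<rightarrow>\<^sub>E Opt m" "\<forall>k<m. ex n g k = 1"
    by auto
  note l2 = L2[OF h mn] and l4 = L4[OF h mn]
  show "(\<lambda>(I,J,\<tau>,\<sigma>,\<pi>). (pp n I J \<tau> \<pi>, gg n I \<sigma> \<pi>))
      ((\<lambda>(p,g). (psiI n g, p ` psiI n g, psiT m n p g, psiS m n p g, psiP m n p g)) b) = b"
    using l4 by (simp add: b)
  show "(\<lambda>(p,g). (psiI n g, p ` psiI n g, psiT m n p g, psiS m n p g, psiP m n p g)) b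
     \<in> Q m n \<times> Q m n \<times> {\<tau>. \<tau> permutes {..<n-m}} \<times> {\<sigma>. \<sigma> permutes {..<m}} \<times> {\<pi>. \<pi> permutes {..<m}}"
    using l2 by (simp add: b)
qed

lemma LHS:
  "Dper m n A X = (\<Sum>x\<in>{x\<in>{p. p permutes {..<n}} \<times> ({..<n} \<rightarrow>\<^sub>E Opt m). \<forall>k<m. ex n (snd x) k = 1}. cf n A X x)"
proof -
  define G where "G = {p. p permutes {..<n}} \<times> ({..<n} \<rightarrow>\<^sub>E Opt m)"
  have fG: "finite G" unfolding G_def
    by (intro finite_cartesian_product finite_permutations finite_PiE) (auto simp: Opt_def)
  have F: "(\<lambda>t. per n (\<lambda>i j. A i j + (\<Sum>k<m. t k * X k i j))) =
     (\<lambda>t. \<Sum>x\<in>G. cf n A X x * (\<Prod>k<m. t k ^ ex n (snd x) k))"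
    by (rule ext, subst expand) (simp add: G_def atLeast0LessThan)
  have "Dper m n A X = (\<Sum>x\<in>G. cf n A X x * (\<Prod>k<m. hj m k (ex n (snd x) k) 0))"
    unfolding Dper_def F mp_mono[OF fG le_refl] by simp
  also have "\<dots> = (\<Sum>x\<in>G. if \<forall>k<m. ex n (snd x) k = 1 then cf n A X x else 0)"
    by (intro sum.cong refl) (auto simp: hj_zero)
  also have "\<dots> = (\<Sum>x\<in>{x\<in>G. \<forall>k<m. ex n (snd x) k = 1}. cf n A X x)"
    by (simp add: sum.inter_filter[OF fG])
  finally show ?thesis by (simp add: G_def)
qed


lemma RHS:
  "of_nat (fact m) * (\<Sum>I\<in>Q m n. \<Sum>J\<in>Q m n.
       per (n - m) (delmat n A I J) * Delta_p m (\<lambda>k. submat (X k) I J))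
   = (\<Sum>(I,J,\<tau>,\<sigma>,\<pi>)\<in>Q m n \<times> Q m n \<times> {\<tau>. \<tau> permutes {..<n-m}} \<times> {\<sigma>. \<sigma> permutes {..<m}} \<times> {\<pi>. \<pi> permutes {..<m}}.
      TT m n A X I J \<tau> \<sigma> \<pi>)"
proof -
  have pe: "per (n - m) (delmat n A I J) =
     (\<Sum>\<tau>\<in>{\<tau>. \<tau> permutes {..<n-m}}. \<Prod>i<n-m. A (en ({..<n}-I) i) (en ({..<n}-J) (\<tau> i)))" for I J
    by (simp add: per_def delmat_def submat_def atLeast0LessThan)
  have de: "of_nat (fact m) * Delta_p m (\<lambda>k. submat (X k) I J) =
     (\<Sum>\<sigma>\<in>{\<sigma>. \<sigma> permutes {..<m}}. \<Sum>\<pi>\<in>{\<pi>. \<pi> permutes {..<m}}.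
        \<Prod>r<m. X (\<sigma> (\<pi> r)) (en I r) (en J (\<pi> r)))" for I J
    by (simp add: Delta_p_def per_def submat_def atLeast0LessThan)
  have "of_nat (fact m) * (\<Sum>I\<in>Q m n. \<Sum>J\<in>Q m n.
       per (n - m) (delmat n A I J) * Delta_p m (\<lambda>k. submat (X k) I J))
     = (\<Sum>I\<in>Q m n. \<Sum>J\<in>Q m n. per (n - m) (delmat n A I J) * (of_nat (fact m) * Delta_p m (\<lambda>k. submat (X k) I J)))"
    by (simp add: sum_distrib_left mult_ac)
  also have "\<dots> = (\<Sum>I\<in>Q m n. \<Sum>J\<in>Q m n. \<Sum>\<tau>\<in>{\<tau>. \<tau> permutes {..<n-m}}. \<Sum>\<sigma>\<in>{\<sigma>. \<sigma> permutes {..<m}}.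
      \<Sum>\<pi>\<in>{\<pi>. \<pi> permutes {..<m}}. TT m n A X I J \<tau> \<sigma> \<pi>)"
    unfolding pe de sum_product by (simp add: sum_distrib_left TT_def)
  also have "\<dots> = (\<Sum>(I,J,\<tau>,\<sigma>,\<pi>)\<in>Q m n \<times> Q m n \<times> {\<tau>. \<tau> permutes {..<n-m}} \<times> {\<sigma>. \<sigma> permutes {..<m}} \<times> {\<pi>. \<pi> permutes {..<m}}.
      TT m n A X I J \<tau> \<sigma> \<pi>)"
    by (simp add: sum.cartesian_product)
  finally show ?thesis .
qed


theorem theorem2p4:
  fixes m n :: nat and A :: "nat \<Rightarrow> nat \<Rightarrow> complex" and X :: "nat \<Rightarrow> nat \<Rightarrow> nat \<Rightarrow> complex"
  assumes "1 \<le> m" and "m \<le> n"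
  shows "Dper m n A X = of_nat (fact m) *
    (\<Sum>I\<in>Q m n. \<Sum>J\<in>Q m n.
       per (n - m) (delmat n A I J) * Delta_p m (\<lambda>k. submat (X k) I J))"
  unfolding LHS RHS SB[OF assms(2)] ..

end
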